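(* Let $d,r,s$ be positive integers with $r\ge s$, let $c$ be an integer with $|c|\le d$, and let $a_1,\dots,a_r$ and $b_1,\dots,b_s$ be integers, none divisible by $3$, with $1\le a_i\le d$ and $1\le b_i\le d$ for all $i$. If $$a_1 3^{2rd}+a_2 3^{2(r-1)d}+\dots+a_r3^{2d}=b_13^{n_1}+b_23^{n_2}+\dots+b_s3^{n_s}+c$$ for integers $n_1>n_2>\dots>n_s\ge0$, then $r=s$, $c=0$, and $a_i=b_i$ and $n_i=2d(r+1-i)$ for $i=1,\dots,r$. *)

theory Defs
  imports Main
begin

end

theory Submission imports Defs begin

definition valid :: "nat \<Rightarrow> int \<Rightarrow> bool" where
  "valid d x \<longleftrightarrow> 1 \<le> x \<and> x \<le> int d \<and> \<not> 3 dvd x"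

lemma lt_pow3: "int n < 3 ^ n"
proof (induction n)
  case (Suc n)
  have "(1::int) \<le> 3 ^ n" by simp
  moreover have "int (Suc n) = int n + 1" "(3::int) ^ Suc n = 3 * 3 ^ n" by simp_all
  ultimately show ?case using Suc.IH by linarith
qed simp

lemma geom3: "2 * (\<Sum>e<n. (3::int) ^ e) = 3 ^ n - 1"
  by (induction n) auto

lemma NT0:
  assumes "valid d b" "f < 2 * d" "(3::int) ^ (2 * d) dvd b * 3 ^ f"
  shows False
proof -
  have "(3::int) ^ (Suc f) dvd 3 ^ (2 * d)" by (rule le_imp_power_dvd) (use assms(2) in simp)
  hence "(3::int) ^ Suc f dvd b * 3 ^ f" using assms(3) dvd_trans by blast
  hence "(3::int) ^ f * 3 dvd 3 ^ f * b" by (simp add: mult.commute)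
  hence "3 dvd b" by (metis dvd_mult_cancel_left mult_eq_0_iff power_not_zero zero_neq_numeral)
  thus False using assms(1) by (simp add: valid_def)
qed

lemma NT1:
  assumes d: "d \<ge> 1" and v: "valid d b" and f: "f < 2 * d" and M: "M \<ge> 1"
    and x: "\<bar>x\<bar> \<le> int d" "x \<noteq> 0" and eq: "b * 3 ^ f = x + 3 ^ (2 * d) * M"
  shows False
proof (cases "d \<le> f")
  case True
  have "(3::int) ^ d dvd b * 3 ^ f" using True by (simp add: le_imp_power_dvd)
  moreover have "(3::int) ^ d dvd 3 ^ (2 * d) * M" by (simp add: le_imp_power_dvd)
  ultimately have "(3::int) ^ d dvd x" using eq by (metis dvd_add_left_iff add.commute)
  hence "\<bar>(3::int) ^ d\<bar> \<le> \<bar>x\<bar>" using x(2) dvd_imp_le_int by blast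
  thus False using x(1) lt_pow3[of d] by simp
next
  case False
  have p3: "(3::int) ^ f * 3 \<le> 3 ^ d" using False
    by (metis Suc_leI not_le power_Suc power_increasing_iff mult.commute numeral_One one_less_numeral_iff semiring_norm(77))
  have bd: "b \<le> int d" "b \<ge> 1" using v by (auto simp: valid_def)
  have "3 * (b * 3 ^ f) \<le> int d * (3 ^ f * 3)" using bd by (simp add: mult_right_mono)
  also have "\<dots> \<le> int d * 3 ^ d" using p3 by (simp add: mult_left_mono)
  also have "\<dots> < 3 ^ d * 3 ^ d" using lt_pow3[of d] by simp
  finally have A: "3 * (b * 3 ^ f) < 3 ^ d * 3 ^ d" .
  have Q: "(3::int) ^ (2 * d) = 3 ^ d * 3 ^ d" by (simp add: power_add mult_2)
  have "(3::int) ^ d \<ge> 3" using d by (metis power_one_right power_increasing_iff one_less_numeral_iff semiring_norm(77))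
  hence "3 ^ d * 3 ^ d \<ge> 3 * (3::int) ^ d" by (simp add: mult_right_mono)
  hence B: "3 ^ d * 3 ^ d > 3 * int d" using lt_pow3[of d] by linarith
  have "3 ^ (2 * d) * M \<ge> (3::int) ^ (2 * d)" using M by simp
  hence "3 * (x + 3 ^ (2 * d) * M) \<ge> 3 * x + 3 * 3 ^ (2 * d)" by simp
  hence "3 * (x + 3 ^ (2 * d) * M) \<ge> 3 ^ d * 3 ^ d" using B x(1) Q by linarith
  thus False using A eq by simp
qed

lemma NT2a:
  assumes d: "d \<ge> 1" and vA: "valid d A" and v1: "valid d b1" and v2: "valid d b2"
    and f: "f2 < f1" "f1 < 2 * d" and M: "M \<ge> 1"
    and eq: "b1 * 3 ^ f1 + b2 * 3 ^ f2 = A + 3 ^ (2 * d) * M"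
  shows False
proof (cases f2)
  case (Suc g)
  have "(3::int) dvd b1 * 3 ^ f1" using f by (cases f1) auto
  moreover have "(3::int) dvd b2 * 3 ^ f2" using Suc by simp
  moreover have "(3::int) dvd 3 ^ (2 * d) * M" using d by (cases d) auto
  ultimately have "3 dvd A" using eq by (metis dvd_add dvd_add_left_iff add.commute)
  thus False using vA by (simp add: valid_def)
next
  case 0
  hence eq2: "b1 * 3 ^ f1 = (A - b2) + 3 ^ (2 * d) * M" using eq by simp
  show False
  proof (cases "A = b2")
    case True
    hence "b1 * 3 ^ f1 = 3 ^ (2 * d) * M" using eq2 by simp
    hence "(3::int) ^ (2 * d) dvd b1 * 3 ^ f1" by simp
    thus False using NT0 v1 f by blast
  next
    case False
    have "\<bar>A - b2\<bar> \<le> int d" using vA v2 by (auto simp: valid_def)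
    thus False using NT1[OF d v1 _ M _ _ eq2] f False by simp
  qed
qed

lemma NT2:
  assumes d: "d \<ge> 1" and vA: "valid d A" and v1: "valid d b1" and v2: "valid d b2"
    and f: "f2 \<noteq> f1" "f1 < 2 * d" "f2 < 2 * d" and M: "M \<ge> 1"
    and eq: "b1 * 3 ^ f1 + b2 * 3 ^ f2 = A + 3 ^ (2 * d) * M"
  shows False
proof (cases "f2 < f1")
  case True show False using NT2a[OF d vA v1 v2 True f(2) M eq] .
next
  case False
  hence "f1 < f2" using f(1) by simp
  moreover have "b2 * 3 ^ f2 + b1 * 3 ^ f1 = A + 3 ^ (2 * d) * M" using eq by simp
  ultimately show False using NT2a[OF d vA v2 v1 _ f(3) M] by blast
qed

lemma G:
  fixes d N :: nat and A :: "nat \<Rightarrow> int"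
  assumes d: "d \<ge> 1" and vA: "\<And>j. A j = 0 \<or> valid d (A j)"
  shows "k \<le> N \<Longrightarrow> \<forall>S B c. finite S \<longrightarrow> (\<forall>e\<in>S. valid d (B e) \<and> 2*d*k \<le> e) \<longrightarrow> \<bar>c\<bar> \<le> int d \<longrightarrow>
     (\<Sum>j\<in>{k..<N}. A j * 3^(2*d*j)) + c * 3^(2*d*k) = (\<Sum>e\<in>S. B e * 3^e) \<longrightarrow>
     (card {j\<in>{k..<N}. A j \<noteq> 0} \<le> card S + (if c \<noteq> 0 \<and> A k \<noteq> 0 then 1 else 0)) \<and>
     ((c = 0 \<or> A k = 0) \<and> card S = card {j\<in>{k..<N}. A j \<noteq> 0} \<longrightarrow>
        c = 0 \<and> S = (\<lambda>j. 2*d*j) ` {j\<in>{k..<N}. A j \<noteq> 0} \<and> (\<forall>j\<in>{k..<N}. A j \<noteq> 0 \<longrightarrow> B (2*d*j) = A j))"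
proof (induction k rule: inc_induct)
  case base
  show ?case
  proof (intro allI impI)
    fix S B and c :: int
    assume fin: "finite S" and eq: "(\<Sum>j\<in>{N..<N}. A j * 3^(2*d*j)) + c * 3^(2*d*N) = (\<Sum>e\<in>S. B e * 3^e)"
    show "(card {j\<in>{N..<N}. A j \<noteq> 0} \<le> card S + (if c \<noteq> 0 \<and> A N \<noteq> 0 then 1 else 0)) \<and>
     ((c = 0 \<or> A N = 0) \<and> card S = card {j\<in>{N..<N}. A j \<noteq> 0} \<longrightarrow>
        c = 0 \<and> S = (\<lambda>j. 2*d*j) ` {j\<in>{N..<N}. A j \<noteq> 0} \<and> (\<forall>j\<in>{N..<N}. A j \<noteq> 0 \<longrightarrow> B (2*d*j) = A j))"
    proof (intro conjI impI)
      assume "(c = 0 \<or> A N = 0) \<and> card S = card {j\<in>{N..<N}. A j \<noteq> 0}"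
      hence "S = {}" using fin by simp
      thus "c = 0" "S = (\<lambda>j. 2*d*j) ` {j\<in>{N..<N}. A j \<noteq> 0}" using eq by simp_all
    qed simp_all
  qed
next
  case (step k)
  show ?case
  proof (intro allI impI)
    fix S B and c :: int
    assume fin: "finite S" and hS: "\<forall>e\<in>S. valid d (B e) \<and> 2*d*k \<le> e" and hc: "\<bar>c\<bar> \<le> int d"
      and eq: "(\<Sum>j\<in>{k..<N}. A j * 3^(2*d*j)) + c * 3^(2*d*k) = (\<Sum>e\<in>S. B e * 3^e)"
    define P :: int where "P = 3^(2*d*k)"
    define Q :: int where "Q = 3^(2*d)"
    have PQ: "(3::int)^(2*d*Suc k) = P*Q" unfolding P_def Q_def
      by (simp add: power_add[symmetric] algebra_simps)
    have Ppos: "P > 0" by (simp add: P_def)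
    have Qd: "2 * int d < Q" "Q \<ge> 3"
    proof -
      have "(3::int)^d \<ge> 3" using d by (metis power_one_right power_increasing_iff one_less_numeral_iff semiring_norm(77))
      moreover have "Q = 3^d * 3^d" by (simp add: Q_def power_add mult_2)
      moreover have "3^d * 3^d \<ge> 3 * (3::int)^d" using calculation by (simp add: mult_right_mono)
      ultimately show "2 * int d < Q" "Q \<ge> 3" using lt_pow3[of d] by linarith+
    qed
    define T where "T = {e\<in>S. e < 2*d*Suc k}"
    define S' where "S' = {e\<in>S. \<not> e < 2*d*Suc k}"
    define H where "H = (\<Sum>j\<in>{Suc k..<N}. A j * 3^(2*d*j))"
    have finT: "finite T" and finS': "finite S'" using fin by (simp_all add: T_def S'_def)
    have TS': "S = T \<union> S'" "T \<inter> S' = {}" by (auto simp: T_def S'_def)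
    have split: "(\<Sum>e\<in>S. B e * 3^e) = (\<Sum>e\<in>T. B e * 3^e) + (\<Sum>e\<in>S'. B e * 3^e)"
      using TS' finT finS' by (simp add: sum.union_disjoint)
    have cardS: "card S = card T + card S'"
      using TS' finT finS' by (simp add: card_Un_disjoint)
    have lhs: "(\<Sum>j\<in>{k..<N}. A j * 3^(2*d*j)) = A k * P + H"
      using step(2) by (simp add: sum.atLeast_Suc_lessThan H_def P_def)
    have dvdS': "P*Q dvd (\<Sum>e\<in>S'. B e * 3^e)"
    proof (rule dvd_sum)
      fix e assume "e \<in> S'"
      hence "2*d*Suc k \<le> e" by (simp add: S'_def)
      hence "(3::int)^(2*d*Suc k) dvd 3^e" by (rule le_imp_power_dvd)
      thus "P*Q dvd B e * 3^e" using PQ by simp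
    qed
    have dvdH: "P*Q dvd H" unfolding H_def
    proof (rule dvd_sum)
      fix j assume "j \<in> {Suc k..<N}"
      hence "Suc k \<le> j" by simp
      hence "2*d*Suc k \<le> 2*d*j" by (rule mult_le_mono2)
      hence "(3::int)^(2*d*Suc k) dvd 3^(2*d*j)" by (rule le_imp_power_dvd)
      thus "P*Q dvd A j * 3^(2*d*j)" using PQ by simp
    qed
    obtain C' where C': "(\<Sum>e\<in>S'. B e * 3^e) - H = P*Q*C'"
      using dvd_diff[OF dvdS' dvdH] by (auto elim: dvdE)
    define z where "z = A k + c - Q*C'"
    have sumT: "(\<Sum>e\<in>T. B e * 3^e) = P*z"
    proof -
      have "A k * P + H + c * P = (\<Sum>e\<in>T. B e * 3^e) + (\<Sum>e\<in>S'. B e * 3^e)"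
        using eq lhs split unfolding P_def by simp
      thus ?thesis using C' by (simp add: z_def algebra_simps)
    qed
    have Bpos: "\<And>e. e \<in> S \<Longrightarrow> B e \<ge> 1" using hS by (auto simp: valid_def)
    have Tne: "T \<noteq> {} \<Longrightarrow> z > 0"
    proof -
      assume "T \<noteq> {}"
      hence "(\<Sum>e\<in>T. B e * 3^e) > 0" using finT Bpos by (intro sum_pos) (auto simp: T_def intro!: mult_pos_pos dest: Bpos)
      thus "z > 0" using sumT Ppos by (simp add: zero_less_mult_iff)
    qed
    have Te: "T = {} \<Longrightarrow> z = 0" using sumT Ppos by simp
    have zge: "z \<ge> 0" using Tne Te by (cases "T = {}") auto
    have zub: "2 * z < int d * Q"
    proof -
      have "(\<Sum>e\<in>T. B e * 3^e) \<le> (\<Sum>e\<in>T. int d * 3^e)"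
        using hS by (intro sum_mono) (auto simp: T_def valid_def)
      also have "\<dots> \<le> (\<Sum>e\<in>{..<2*d*Suc k}. int d * 3^e)"
        by (intro sum_mono2) (auto simp: T_def)
      also have "\<dots> = int d * (\<Sum>e<2*d*Suc k. 3^e)" by (simp add: sum_distrib_left)
      finally have "2 * (P*z) \<le> int d * (2 * (\<Sum>e<2*d*Suc k. (3::int)^e))" using sumT by simp
      also have "\<dots> = int d * (P*Q - 1)" using geom3 PQ by simp
      also have "\<dots> < int d * (P*Q)" using d by simp
      finally have "P * (2*z) < P * (int d * Q)" by (simp add: algebra_simps)
      thus ?thesis using Ppos by simp
    qed
    have Ak: "0 \<le> A k" "A k \<le> int d" using vA[of k] by (auto simp: valid_def)
    have C'le: "C' \<le> 0"
    proof -
      have "Q * C' < Q * 1" using z_def zge Ak hc Qd by linarith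
      hence "C' < 1" using Qd by simp
      thus ?thesis by simp
    qed
    have C'ge: "- C' \<le> int d"
    proof -
      have "Q * (2 * (- C')) < Q * (int d + 1)" using z_def zub Ak hc Qd by (simp add: algebra_simps)
      hence "2 * (-C') < int d + 1" by (rule mult_left_less_imp_less) (use Qd in simp)
      thus ?thesis using d by linarith
    qed
    note ASdefs = refl
    have IH: "(card {j\<in>{Suc k..<N}. A j \<noteq> 0} \<le> card S' + (if C' \<noteq> 0 \<and> A (Suc k) \<noteq> 0 then 1 else 0)) \<and>
     ((C' = 0 \<or> A (Suc k) = 0) \<and> card S' = card {j\<in>{Suc k..<N}. A j \<noteq> 0} \<longrightarrow>
        C' = 0 \<and> S' = (\<lambda>j. 2*d*j) ` {j\<in>{Suc k..<N}. A j \<noteq> 0} \<and> (\<forall>j\<in>{Suc k..<N}. A j \<noteq> 0 \<longrightarrow> B (2*d*j) = A j))"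
    proof -
      have "\<forall>e\<in>S'. valid d (B e) \<and> 2*d*Suc k \<le> e" using hS by (auto simp: S'_def)
      moreover have "\<bar>C'\<bar> \<le> int d" using C'le C'ge by linarith
      moreover have "H + C' * 3^(2*d*Suc k) = (\<Sum>e\<in>S'. B e * 3^e)" using C' PQ by (simp add: algebra_simps)
      ultimately show ?thesis using step(3) finS' unfolding H_def by blast
    qed
    define AS where "AS = {j\<in>{k..<N}. A j \<noteq> 0}"
    define AS' where "AS' = {j\<in>{Suc k..<N}. A j \<noteq> 0}"
    have finAS': "finite AS'" by (simp add: AS'_def)
    have ASeq: "AS = (if A k \<noteq> 0 then insert k AS' else AS')"
      using step(2) unfolding AS_def AS'_def by (auto simp: Suc_le_eq le_less)
    have cardAS: "card AS = (if A k \<noteq> 0 then 1 else 0) + card AS'"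
      using ASeq finAS' by (simp add: AS'_def)
    have Tsub: "\<And>e. e \<in> T \<Longrightarrow> 2*d*k \<le> e \<and> e < 2*d*k + 2*d"
      using hS by (auto simp: T_def)
    have TinS: "T \<subseteq> S" by (auto simp: T_def)
    have blockval: "\<And>e. e \<in> T \<Longrightarrow> B e * 3^e = P * (B e * 3^(e - 2*d*k))"
    proof -
      fix e assume "e \<in> T"
      hence "e = 2*d*k + (e - 2*d*k)" using Tsub by simp
      hence "(3::int)^e = P * 3^(e - 2*d*k)" unfolding P_def by (metis power_add)
      thus "B e * 3^e = P * (B e * 3^(e - 2*d*k))" by simp
    qed
    have single: "card T = 1 \<Longrightarrow> \<exists>e f. T = {e} \<and> e = 2*d*k + f \<and> f < 2*d \<and> valid d (B e) \<and> z = B e * 3^f"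
    proof -
      assume "card T = 1"
      then obtain e where Te: "T = {e}" by (auto simp: card_Suc_eq)
      hence eT: "e \<in> T" by simp
      have "(\<Sum>e\<in>T. B e * 3^e) = B e * 3^e" using Te by simp
      hence "P * z = P * (B e * 3^(e - 2*d*k))" using sumT blockval[OF eT] by metis
      hence "z = B e * 3^(e - 2*d*k)" using Ppos by simp
      thus ?thesis using Te Tsub[OF eT] hS TinS eT by (intro exI[of _ e] exI[of _ "e - 2*d*k"]) auto
    qed
    have double: "card T = 2 \<Longrightarrow> \<exists>e1 e2 f1 f2. f1 \<noteq> f2 \<and> f1 < 2*d \<and> f2 < 2*d \<and> valid d (B e1) \<and> valid d (B e2)
         \<and> z = B e1 * 3^f1 + B e2 * 3^f2"
    proof -
      assume "card T = 2"
      then obtain e1 e2 where Te: "T = {e1, e2}" "e1 \<noteq> e2" by (auto simp: card_2_iff)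
      hence eT: "e1 \<in> T" "e2 \<in> T" by simp_all
      have "P * z = P * (B e1 * 3^(e1 - 2*d*k)) + P * (B e2 * 3^(e2 - 2*d*k))"
        using sumT blockval[OF eT(1)] blockval[OF eT(2)] Te by simp
      hence "z = B e1 * 3^(e1 - 2*d*k) + B e2 * 3^(e2 - 2*d*k)" using Ppos
        by (metis distrib_left mult_cancel_left less_irrefl)
      moreover have "e1 - 2*d*k \<noteq> e2 - 2*d*k" using Te Tsub[OF eT(1)] Tsub[OF eT(2)] by linarith
      ultimately show ?thesis using Tsub[OF eT(1)] Tsub[OF eT(2)] hS TinS eT
        by (intro exI[of _ e1] exI[of _ e2] exI[of _ "e1 - 2*d*k"] exI[of _ "e2 - 2*d*k"]) auto
    qed
    have cardT0: "card T = 0 \<longleftrightarrow> T = {}" using finT by simp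
    have zC: "C' \<noteq> 0 \<Longrightarrow> z = (A k + c) + Q * (- C') \<and> - C' \<ge> 1 \<and> z > 0"
    proof -
      assume "C' \<noteq> 0"
      hence M: "- C' \<ge> 1" using C'le by simp
      hence "Q * (-C') \<ge> Q * 1" using Qd by (intro mult_left_mono) auto
      thus ?thesis using M z_def Ak hc Qd by simp
    qed
    have noSingle: "C' \<noteq> 0 \<Longrightarrow> \<not> (c \<noteq> 0 \<and> A k \<noteq> 0) \<Longrightarrow> card T \<noteq> 1"
    proof
      assume C0: "C' \<noteq> 0" and nb: "\<not> (c \<noteq> 0 \<and> A k \<noteq> 0)" and c1: "card T = 1"
      obtain e f where ef: "f < 2*d" "valid d (B e)" "z = B e * 3^f" using single[OF c1] by blast
      have zz: "B e * 3^f = (A k + c) + 3^(2*d) * (- C')" "- C' \<ge> 1" using zC[OF C0] ef Q_def by simp_all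
      show False
      proof (cases "A k + c = 0")
        case True
        hence "(3::int)^(2*d) dvd B e * 3^f" using zz by simp
        thus False using NT0 ef by blast
      next
        case False
        have "\<bar>A k + c\<bar> \<le> int d" using nb Ak hc by auto
        thus False using NT1[OF d ef(2) ef(1) zz(2) _ False zz(1)] by simp
      qed
    qed
    have noDouble: "C' \<noteq> 0 \<Longrightarrow> A k \<noteq> 0 \<Longrightarrow> c = 0 \<Longrightarrow> card T \<noteq> 2"
    proof
      assume C0: "C' \<noteq> 0" and a: "A k \<noteq> 0" and c0: "c = 0" and c2: "card T = 2"
      obtain e1 e2 f1 f2 where ef: "f1 \<noteq> f2" "f1 < 2*d" "f2 < 2*d" "valid d (B e1)" "valid d (B e2)"
        "z = B e1 * 3^f1 + B e2 * 3^f2" using double[OF c2] by blast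
      have zz: "B e1 * 3^f1 + B e2 * 3^f2 = A k + 3^(2*d) * (- C')" "- C' \<ge> 1"
        using zC[OF C0] ef c0 Q_def by simp_all
      have "valid d (A k)" using vA[of k] a by simp
      thus False using NT2[OF d _ ef(4) ef(5) ef(1)[symmetric] ef(2) ef(3) zz(2) zz(1)] by simp
    qed
    have IH1: "card AS' \<le> card S' + (if C' \<noteq> 0 then 1 else 0)"
    proof -
      have "card AS' \<le> card S' + (if C' \<noteq> 0 \<and> A (Suc k) \<noteq> 0 then 1 else 0)" using IH AS'_def by blast
      thus ?thesis by (auto split: if_splits)
    qed
    show "(card AS \<le> card S + (if c \<noteq> 0 \<and> A k \<noteq> 0 then 1 else 0)) \<and>
     ((c = 0 \<or> A k = 0) \<and> card S = card AS \<longrightarrow>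
        c = 0 \<and> S = (\<lambda>j. 2*d*j) ` AS \<and> (\<forall>j\<in>{k..<N}. A j \<noteq> 0 \<longrightarrow> B (2*d*j) = A j))"
    proof (intro conjI impI)
      have "(if A k \<noteq> 0 then 1 else 0) + (if C' \<noteq> 0 then 1 else 0) \<le> card T + (if c \<noteq> 0 \<and> A k \<noteq> 0 then 1 else (0::nat))"
      proof (cases "C' = 0")
        case True
        hence "z = A k + c" using z_def by simp
        hence "A k \<noteq> 0 \<Longrightarrow> c = 0 \<Longrightarrow> T \<noteq> {}" using Te by auto
        thus ?thesis using True cardT0 by auto
      next
        case False
        hence "T \<noteq> {}" using zC Te by force
        hence "card T \<ge> 1" using cardT0 by linarith
        moreover have "A k \<noteq> 0 \<Longrightarrow> c = 0 \<Longrightarrow> card T \<noteq> 1" using noSingle False by blast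
        ultimately show ?thesis using False by auto
      qed
      thus "card AS \<le> card S + (if c \<noteq> 0 \<and> A k \<noteq> 0 then 1 else 0)"
        using cardAS cardS IH1 by auto
    next
      assume H0: "(c = 0 \<or> A k = 0) \<and> card S = card AS"
      have C0: "C' = 0"
      proof (rule ccontr)
        assume C0: "C' \<noteq> 0"
        hence "card T \<le> (if A k \<noteq> 0 then 1 else 0) + 1" using H0 cardAS cardS IH1 by auto
        moreover have "T \<noteq> {}" using zC[OF C0] Te by force
        moreover have "card T \<noteq> 1" using noSingle[OF C0] H0 by blast
        moreover have "A k \<noteq> 0 \<Longrightarrow> card T \<noteq> 2" using noDouble[OF C0] H0 by blast
        ultimately show False using cardT0 by (auto split: if_splits)
      qed
      hence zA: "z = A k + c" using z_def by simp
      have ctT: "card T \<le> (if A k \<noteq> 0 then 1 else 0)" using H0 cardAS cardS IH1 C0 by auto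
      show c0: "c = 0"
      proof (rule ccontr)
        assume "c \<noteq> 0"
        hence "A k = 0" using H0 by simp
        hence "z \<noteq> 0" using zA \<open>c \<noteq> 0\<close> by simp
        hence "T \<noteq> {}" using Te by blast
        thus False using ctT \<open>A k = 0\<close> cardT0 by simp
      qed
      have AS'le: "card AS' \<le> card S'" using IH1 C0 by simp
      have cS': "card S' = card AS'"
      proof (cases "A k = 0")
        case True thus ?thesis using H0[THEN conjunct2] cardAS cardS AS'le ctT by simp
      next
        case False
        have "z \<noteq> 0" using zA c0 False by simp
        hence "T \<noteq> {}" using Te by blast
        hence "card T \<noteq> 0" using cardT0 by simp
        moreover have "card T \<le> 1" "card AS = 1 + card AS'" using ctT cardAS False by simp_all
        ultimately show ?thesis using H0[THEN conjunct2] cardS AS'le by linarith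
      qed
      have IH2: "S' = (\<lambda>j. 2*d*j) ` AS' \<and> (\<forall>j\<in>{Suc k..<N}. A j \<noteq> 0 \<longrightarrow> B (2*d*j) = A j)"
        using IH C0 cS' AS'_def by auto
      have Tk: "T = (if A k \<noteq> 0 then {2*d*k} else {}) \<and> (A k \<noteq> 0 \<longrightarrow> B (2*d*k) = A k)"
      proof (cases "A k = 0")
        case True
        hence "z = 0" using zA c0 by simp
        hence "T = {}" using Tne by force
        thus ?thesis using True by simp
      next
        case False
        hence "z \<noteq> 0" using zA c0 by simp
        hence "T \<noteq> {}" using Te by blast
        hence "card T = 1" using ctT False cardT0 by simp
        then obtain e f where ef: "T = {e}" "e = 2*d*k + f" "z = B e * 3^f" using single by blast
        have "f = 0"
        proof (rule ccontr)
          assume "f \<noteq> 0"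
          hence "(3::int) dvd B e * 3^f" by (cases f) auto
          hence "3 dvd A k" using ef zA c0 by simp
          thus False using vA[of k] False by (simp add: valid_def)
        qed
        thus ?thesis using ef zA c0 False by simp
      qed
      show "S = (\<lambda>j. 2*d*j) ` AS" using TS'(1) Tk IH2 ASeq by auto
      show "\<forall>j\<in>{k..<N}. A j \<noteq> 0 \<longrightarrow> B (2*d*j) = A j"
      proof (intro ballI impI)
        fix j assume j: "j \<in> {k..<N}" "A j \<noteq> 0"
        show "B (2*d*j) = A j"
        proof (cases "j = k")
          case True thus ?thesis using Tk j by simp
        next
          case False thus ?thesis using IH2 j by simp
        qed
      qed
    qed
  qed
qed

lemma order_lemma:
  fixes J :: "nat \<Rightarrow> nat"
  assumes rng: "\<And>i. i \<in> {1..r} \<Longrightarrow> 1 \<le> J i \<and> J i \<le> r"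
    and dec: "\<And>i. i \<in> {1..<r} \<Longrightarrow> J (Suc i) < J i"
    and i: "i \<in> {1..r}"
  shows "J i = r + 1 - i"
proof -
  have lo: "\<And>t. t < r \<Longrightarrow> J (r - t) \<ge> t + 1"
  proof -
    fix t show "t < r \<Longrightarrow> J (r - t) \<ge> t + 1"
    proof (induction t)
      case 0 thus ?case using rng[of r] by simp
    next
      case (Suc t)
      have "J (Suc (r - Suc t)) < J (r - Suc t)" using dec[of "r - Suc t"] Suc.prems by simp
      moreover have "Suc (r - Suc t) = r - t" using Suc.prems by simp
      ultimately show ?case using Suc by simp
    qed
  qed
  have hi: "\<And>i. 1 \<le> i \<Longrightarrow> i \<le> r \<Longrightarrow> J i \<le> r + 1 - i"
  proof -
    fix i show "1 \<le> i \<Longrightarrow> i \<le> r \<Longrightarrow> J i \<le> r + 1 - i"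
    proof (induction i)
      case 0 thus ?case by simp
    next
      case (Suc i)
      show ?case
      proof (cases "i = 0")
        case True thus ?thesis using rng[of 1] Suc.prems by simp
      next
        case False
        hence "J (Suc i) < J i" using dec[of i] Suc.prems by simp
        moreover have "J i \<le> r + 1 - i" using Suc False by simp
        ultimately show ?thesis using Suc.prems by simp
      qed
    qed
  qed
  have "J (r - (r - i)) \<ge> r - i + 1" using lo[of "r - i"] i by simp
  moreover have "r - (r - i) = i" using i by simp
  ultimately show ?thesis using hi[of i] i by simp
qed

theorem lemma2p2:
  fixes d r s :: nat and c :: int and a b :: "nat \<Rightarrow> int" and n :: "nat \<Rightarrow> nat"
  assumes "d \<ge> 1" and "r \<ge> 1" and "s \<ge> 1" and "r \<ge> s"
    and "\<bar>c\<bar> \<le> int d"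
    and "\<And>i. i \<in> {1..r} \<Longrightarrow> 1 \<le> a i \<and> a i \<le> int d \<and> \<not> 3 dvd a i"
    and "\<And>i. i \<in> {1..s} \<Longrightarrow> 1 \<le> b i \<and> b i \<le> int d \<and> \<not> 3 dvd b i"
    and "\<And>i. i \<in> {1..<s} \<Longrightarrow> n i > n (Suc i)"
    and "(\<Sum>i=1..r. a i * 3 ^ (2 * (r + 1 - i) * d)) = (\<Sum>i=1..s. b i * 3 ^ (n i)) + c"
  shows "r = s \<and> c = 0 \<and> (\<forall>i\<in>{1..r}. a i = b i \<and> n i = 2 * d * (r + 1 - i))"
proof -
  note d = assms(1)
  define A where "A j = (if 1 \<le> j \<and> j \<le> r then a (r + 1 - j) else 0)" for j
  have vA: "\<And>j. A j = 0 \<or> valid d (A j)"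
  proof -
    fix j show "A j = 0 \<or> valid d (A j)"
    proof (cases "1 \<le> j \<and> j \<le> r")
      case True
      hence "r + 1 - j \<in> {1..r}" by auto
      from assms(6)[OF this] show ?thesis using True by (simp add: A_def valid_def)
    next
      case False hence "A j = 0" unfolding A_def by auto
      thus ?thesis by simp
    qed
  qed
  have A0: "A 0 = 0" by (simp add: A_def)
  have dec: "\<And>i j. 1 \<le> i \<Longrightarrow> i < j \<Longrightarrow> j \<le> s \<Longrightarrow> n j < n i"
  proof -
    fix i j :: nat
    show "1 \<le> i \<Longrightarrow> i < j \<Longrightarrow> j \<le> s \<Longrightarrow> n j < n i"
    proof (induction j)
      case 0 thus ?case by simp
    next
      case (Suc j)
      have "n (Suc j) < n j" using assms(8)[of j] Suc.prems by simp
      thus ?case using Suc by (cases "i = j") auto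
    qed
  qed
  have inj: "inj_on n {1..s}"
  proof (rule inj_onI)
    fix x y assume "x \<in> {1..s}" "y \<in> {1..s}" "n x = n y"
    thus "x = y" using dec[of x y] dec[of y x] by (cases x y rule: linorder_cases) auto
  qed
  define S where "S = n ` {1..s}"
  define B where "B e = b (inv_into {1..s} n e)" for e
  have finS: "finite S" by (simp add: S_def)
  have cardS: "card S = s" using inj by (simp add: S_def card_image)
  have Bn: "\<And>i. i \<in> {1..s} \<Longrightarrow> B (n i) = b i" using inj by (simp add: B_def inv_into_f_f)
  have hS: "\<forall>e\<in>S. valid d (B e) \<and> 2*d*0 \<le> e"
    using Bn assms(7) by (auto simp: S_def valid_def)
  have rhs: "(\<Sum>i=1..s. b i * 3 ^ (n i)) = (\<Sum>e\<in>S. B e * 3^e)"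
    unfolding S_def using inj by (simp add: sum.reindex Bn)
  have lhs1: "(\<Sum>i=1..r. a i * 3 ^ (2 * (r + 1 - i) * d)) = (\<Sum>j=1..r. A j * 3^(2*d*j))"
  proof (rule sum.reindex_bij_witness[of _ "\<lambda>j. r+1-j" "\<lambda>j. r+1-j"])
    fix i :: nat assume i: "i \<in> {1..r}"
    have i1: "r + 1 - i \<in> {1..r}" "r + 1 - (r + 1 - i) = i" using i by auto
    have "A (r + 1 - i) = a (r + 1 - (r + 1 - i))" using i1(1) unfolding A_def by simp
    hence "A (r + 1 - i) = a i" using i1(2) by simp
    moreover have "2 * d * (r + 1 - i) = 2 * (r + 1 - i) * d" by simp
    ultimately show "A (r + 1 - i) * 3 ^ (2 * d * (r + 1 - i)) = a i * 3 ^ (2 * (r + 1 - i) * d)"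
      by metis
  qed auto
  have lhs2: "(\<Sum>j\<in>{0..<Suc r}. A j * 3^(2*d*j)) = (\<Sum>j=1..r. A j * 3^(2*d*j))"
  proof -
    have "{0..<Suc r} = insert 0 {1..r}" by auto
    thus ?thesis using A0 by simp
  qed
  have eqG: "(\<Sum>j\<in>{0..<Suc r}. A j * 3^(2*d*j)) + (-c) * 3^(2*d*0) = (\<Sum>e\<in>S. B e * 3^e)"
    using assms(9) lhs1 lhs2 rhs by simp
  have Anz: "\<And>j. j \<in> {1..r} \<Longrightarrow> A j \<noteq> 0"
  proof -
    fix j assume j: "j \<in> {1..r}"
    hence "r + 1 - j \<in> {1..r}" by auto
    from assms(6)[OF this] show "A j \<noteq> 0" using j by (simp add: A_def)
  qed
  have Az: "\<And>j. A j \<noteq> 0 \<Longrightarrow> j \<in> {1..r}"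
  proof -
    fix j assume "A j \<noteq> 0"
    thus "j \<in> {1..r}" unfolding A_def by (cases "1 \<le> j \<and> j \<le> r") auto
  qed
  have AS: "{j\<in>{0..<Suc r}. A j \<noteq> 0} = {1..r}"
  proof
    show "{j\<in>{0..<Suc r}. A j \<noteq> 0} \<subseteq> {1..r}" using Az by blast
    show "{1..r} \<subseteq> {j\<in>{0..<Suc r}. A j \<noteq> 0}"
    proof
      fix j assume j: "j \<in> {1..r}"
      hence "j \<in> {0..<Suc r}" by simp
      thus "j \<in> {j\<in>{0..<Suc r}. A j \<noteq> 0}" using Anz[OF j] by simp
    qed
  qed
  note GG = G[where A=A and d=d and N="Suc r" and k=0, OF d vA]
  have res: "(r \<le> s + 0) \<and> ((True \<and> s = r) \<longrightarrow>
        -c = 0 \<and> S = (\<lambda>j. 2*d*j) ` {1..r} \<and> (\<forall>j\<in>{0..<Suc r}. A j \<noteq> 0 \<longrightarrow> B (2*d*j) = A j))"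
  proof -
    have cc: "\<bar>-c\<bar> \<le> int d" using assms(5) by simp
    note R = GG[OF le0[of "Suc r"], THEN spec[where x=S], THEN spec[where x=B], THEN spec[where x="-c"]]
    note R2 = R[THEN mp, OF finS, THEN mp, OF hS, THEN mp, OF cc, THEN mp, OF eqG]
    show ?thesis using R2 unfolding AS A0 cardS by simp
  qed
  hence rs: "r = s" using assms(4) by simp
  with res have c0: "c = 0" and Simg: "S = (\<lambda>j. 2*d*j) ` {1..r}"
    and BA: "\<forall>j\<in>{0..<Suc r}. A j \<noteq> 0 \<longrightarrow> B (2*d*j) = A j" by simp_all
  define J where "J i = n i div (2*d)" for i
  have nJ: "\<And>i. i \<in> {1..r} \<Longrightarrow> n i = 2*d*J i \<and> 1 \<le> J i \<and> J i \<le> r"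
  proof -
    fix i assume i: "i \<in> {1..r}"
    hence "n i \<in> S" using rs by (simp add: S_def)
    then obtain j where "j \<in> {1..r}" "n i = 2*d*j" using Simg by auto
    thus "n i = 2*d*J i \<and> 1 \<le> J i \<and> J i \<le> r" using d by (simp add: J_def)
  qed
  have Jdec: "\<And>i. i \<in> {1..<r} \<Longrightarrow> J (Suc i) < J i"
  proof -
    fix i assume i: "i \<in> {1..<r}"
    hence "n (Suc i) < n i" using assms(8) rs by simp
    hence "2*d*J (Suc i) < 2*d*J i" using nJ[of i] nJ[of "Suc i"] i by simp
    thus "J (Suc i) < J i" by simp
  qed
  have nval: "\<And>i. i \<in> {1..r} \<Longrightarrow> n i = 2 * d * (r + 1 - i)"
    using nJ order_lemma[of r J] Jdec by metis
  have ab: "\<And>i. i \<in> {1..r} \<Longrightarrow> a i = b i"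
  proof -
    fix i assume i: "i \<in> {1..r}"
    have "b i = B (n i)" using Bn i rs by simp
    also have "\<dots> = B (2*d*(r+1-i))" using nval i by simp
    also have "\<dots> = A (r+1-i)" using BA i assms(6)[of i] by (auto simp: A_def)
    also have "\<dots> = a (r + 1 - (r + 1 - i))"
    proof -
      have "r + 1 - i \<in> {1..r}" using i by auto
      thus ?thesis unfolding A_def by simp
    qed
    also have "r + 1 - (r + 1 - i) = i" using i by simp
    finally show "a i = b i" by simp
  qed
  show ?thesis using rs c0 ab nval by simp
qed

end
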